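(* Let $x,y\in(0,1)$ and $n\in\mathbb{N}$. Let $X_1,X_2\sim B(n,x)$ be independent, $Y_1,Y_2\sim B(n,y)$ be independent, and $S_{2n}^*\sim B\bigl(2n,\tfrac{x+y}{2}\bigr)$. Then \[ F_{S_{2n}^*}\leqslant_{\mathrm{cx}}\tfrac12\bigl(F_{X_1+X_2}+F_{Y_1+Y_2}\bigr), \] i.e. $\mathbb{E}\,f(S_{2n}^* )\le \tfrac12\bigl(\mathbb{E}\,f(X_1+X_2)+\mathbb{E}\,f(Y_1+Y_2)\bigr)$ for every convex $f:\mathbb{R}\to\mathbb{R}$.
   Context: $B(n,p)$ denotes the binomial distribution: $P(X=k)=\binom nk p^k(1-p)^{n-k}$, $k=0,\dots,n$. $F_X(t)=P(X<t)$. For distribution functions $G,H$ of probability measures with finite first moment, $G\leqslant_{\mathrm{cx}}H$ means $\int f\,dG\le\int f\,dH$ for all convex $f:\mathbb{R}\to\mathbb{R}$ for which the integrals exist; a convex combination of distribution functions is the distribution function of the corresponding mixture. *)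

theory Defs
  imports "HOL-Probability.Probability"
begin

definition sum_indep_pmf :: "nat pmf \<Rightarrow> nat pmf \<Rightarrow> nat pmf" where
  "sum_indep_pmf p q = map_pmf (\<lambda>(a, b). a + b) (pair_pmf p q)"

end

theory Submission
  imports Defs
begin

definition Gb :: "nat \<Rightarrow> (nat \<Rightarrow> real) \<Rightarrow> real \<Rightarrow> real" where
  "Gb m h p = (\<Sum>k\<le>m. (real (m choose k) * p ^ k * (1 - p) ^ (m - k)) * h k)"

definition Df :: "(nat \<Rightarrow> real) \<Rightarrow> nat \<Rightarrow> real" where
  "Df h k = h (Suc k) - h k"

lemma Gb_0 [simp]: "Gb 0 h p = h 0"
  by (simp add: Gb_def)

lemma Gb_Suc: "Gb (Suc m) h p = p * Gb m (\<lambda>k. h (Suc k)) p + (1 - p) * Gb m h p"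
proof -
  have s1: "Gb (Suc m) h p = (1-p)^(Suc m) * h 0 +
      (\<Sum>j\<le>m. (real (Suc m choose Suc j) * p ^ Suc j * (1 - p) ^ (m - j)) * h (Suc j))"
    unfolding Gb_def by (subst sum.atMost_Suc_shift) simp
  have s2: "(\<Sum>j\<le>m. (real (Suc m choose Suc j) * p ^ Suc j * (1 - p) ^ (m - j)) * h (Suc j))
     = (\<Sum>j\<le>m. (real (m choose j) * p ^ Suc j * (1 - p) ^ (m - j)) * h (Suc j))
     + (\<Sum>j\<le>m. (real (m choose Suc j) * p ^ Suc j * (1 - p) ^ (m - j)) * h (Suc j))"
    by (simp add: sum.distrib[symmetric] algebra_simps)
  have s3: "(\<Sum>j\<le>m. (real (m choose j) * p ^ Suc j * (1 - p) ^ (m - j)) * h (Suc j))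
     = p * Gb m (\<lambda>k. h (Suc k)) p"
    unfolding Gb_def by (simp add: sum_distrib_left algebra_simps)
  have s4: "(1-p)^(Suc m) * h 0 + (\<Sum>j\<le>m. (real (m choose Suc j) * p ^ Suc j * (1 - p) ^ (m - j)) * h (Suc j))
     = (\<Sum>k\<le>Suc m. (real (m choose k) * p ^ k * (1 - p) ^ (Suc m - k)) * h k)"
    by (subst sum.atMost_Suc_shift) simp
  have s5: "(\<Sum>k\<le>Suc m. (real (m choose k) * p ^ k * (1 - p) ^ (Suc m - k)) * h k)
     = (\<Sum>k\<le>m. (real (m choose k) * p ^ k * (1 - p) ^ (Suc m - k)) * h k)"
    by simp
  have s6: "(\<Sum>k\<le>m. (real (m choose k) * p ^ k * (1 - p) ^ (Suc m - k)) * h k) = (1 - p) * Gb m h p"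
    unfolding Gb_def sum_distrib_left
    by (intro sum.cong refl) (simp add: Suc_diff_le algebra_simps)
  show ?thesis using s1 s2 s3 s4 s5 s6 by linarith
qed

lemma Gb_diff: "Gb m h p - Gb m g p = Gb m (\<lambda>k. h k - g k) p"
  unfolding Gb_def by (simp add: sum_subtractf[symmetric] algebra_simps)

lemma Gb_nonneg: "(\<And>k. h k \<ge> 0) \<Longrightarrow> 0 \<le> p \<Longrightarrow> p \<le> 1 \<Longrightarrow> Gb m h p \<ge> 0"
  unfolding Gb_def by (intro sum_nonneg mult_nonneg_nonneg) auto

lemma Gb_deriv: "((Gb m h) has_real_derivative (real m * Gb (m - 1) (Df h) p)) (at p)"
proof (induction m arbitrary: h p)
  case 0
  then show ?case by simp
next
  case (Suc m)
  have eq: "Gb (Suc m) h = (\<lambda>p. p * Gb m (\<lambda>k. h (Suc k)) p + (1 - p) * Gb m h p)"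
    by (rule ext) (rule Gb_Suc)
  have D1: "((Gb m (\<lambda>k. h (Suc k))) has_real_derivative (real m * Gb (m - 1) (Df (\<lambda>k. h (Suc k))) p)) (at p)"
    using Suc.IH by blast
  have D2: "((Gb m h) has_real_derivative (real m * Gb (m - 1) (Df h) p)) (at p)"
    using Suc.IH by blast
  have key: "Gb m (\<lambda>k. h (Suc k)) p - Gb m h p
     + p * (real m * Gb (m - 1) (Df (\<lambda>k. h (Suc k))) p) + (1 - p) * (real m * Gb (m - 1) (Df h) p)
     = real (Suc m) * Gb (Suc m - 1) (Df h) p"
  proof (cases m)
    case 0
    then show ?thesis by (simp add: Df_def Gb_def)
  next
    case (Suc m')
    have a: "Df (\<lambda>k. h (Suc k)) = (\<lambda>k. Df h (Suc k))" by (simp add: Df_def fun_eq_iff)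
    have "p * (real m * Gb (m - 1) (Df (\<lambda>k. h (Suc k))) p) + (1 - p) * (real m * Gb (m - 1) (Df h) p)
        = real m * Gb m (Df h) p"
      using Suc by (simp add: a Gb_Suc algebra_simps)
    moreover have "Gb m (\<lambda>k. h (Suc k)) p - Gb m h p = Gb m (Df h) p"
      by (simp add: Gb_diff Df_def[abs_def])
    ultimately show ?thesis by (simp add: algebra_simps)
  qed
  show ?case
    unfolding eq
    by (rule derivative_eq_intros D1 D2 | simp)+ (use key in \<open>simp add: algebra_simps\<close>)
qed

lemma sum_indep_binomial:
  assumes p: "p \<in> {0..1}"
  shows "sum_indep_pmf (binomial_pmf n p) (binomial_pmf m p) = binomial_pmf (n + m) p"
proof (induction n)
  case 0
  then show ?case using p
    by (simp add: sum_indep_pmf_def binomial_pmf_0 pair_return_pmf1 pmf.map_comp o_def)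
next
  case (Suc n)
  have "sum_indep_pmf (binomial_pmf (Suc n) p) (binomial_pmf m p)
     = bernoulli_pmf p \<bind> (\<lambda>b. sum_indep_pmf (binomial_pmf n p) (binomial_pmf m p) \<bind>
          (\<lambda>k. return_pmf ((if b then 1 else 0) + k)))"
    using p unfolding sum_indep_pmf_def
    by (simp add: binomial_pmf_Suc pair_pmf_def map_pmf_def bind_assoc_pmf bind_return_pmf add.assoc)
  also have "\<dots> = binomial_pmf (Suc n + m) p"
    using p by (simp add: Suc binomial_pmf_Suc)
  finally show ?case .
qed

lemma Gb_convex:
  assumes "convex_on UNIV f"
  shows "convex_on {0..1} (Gb M (\<lambda>k. f (real k)))"
proof -
  let ?g = "\<lambda>k. f (real k)"
  have dd: "Df (Df ?g) k \<ge> 0" for k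
  proof -
    have "f ((1 - 1/2) * real k + (1/2) * real (k+2)) \<le> (1 - 1/2) * f (real k) + (1/2) * f (real (k+2))"
      using convex_onD[OF assms, of "1/2" "real k" "real (k+2)"] by simp
    moreover have "(1 - 1/2) * real k + (1/2) * real (k+2) = real (Suc k)" by (simp add: field_simps)
    ultimately show ?thesis by (simp add: Df_def algebra_simps)
  qed
  show ?thesis
  proof (rule f''_ge0_imp_convex)
    show "convex {0..1::real}" by simp
    show "\<And>x. x \<in> {0..1} \<Longrightarrow> (Gb M ?g has_real_derivative (real M * Gb (M - 1) (Df ?g) x)) (at x)"
      by (rule Gb_deriv)
    show "\<And>x. x \<in> {0..1} \<Longrightarrow> ((\<lambda>x. real M * Gb (M - 1) (Df ?g) x) has_real_derivative
        (real M * (real (M - 1) * Gb (M - 1 - 1) (Df (Df ?g)) x))) (at x)"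
      by (intro DERIV_cmult Gb_deriv)
    show "\<And>x. x \<in> {0..1} \<Longrightarrow> 0 \<le> real M * (real (M - 1) * Gb (M - 1 - 1) (Df (Df ?g)) x)"
      using dd by (intro mult_nonneg_nonneg Gb_nonneg) auto
  qed
qed

theorem proposition2:
  fixes x y :: real and n :: nat and f :: "real \<Rightarrow> real"
  assumes "0 < x" "x < 1" "0 < y" "y < 1"
    and "convex_on UNIV f"
  shows "measure_pmf.expectation (binomial_pmf (2 * n) ((x + y) / 2)) (\<lambda>k. f (real k))
    \<le> 1 / 2 * (measure_pmf.expectation (sum_indep_pmf (binomial_pmf n x) (binomial_pmf n x)) (\<lambda>k. f (real k))
             + measure_pmf.expectation (sum_indep_pmf (binomial_pmf n y) (binomial_pmf n y)) (\<lambda>k. f (real k)))"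
proof -
  have E: "measure_pmf.expectation (binomial_pmf m p) (\<lambda>k. f (real k)) = Gb m (\<lambda>k. f (real k)) p"
    if "p \<in> {0..1}" for m p
    using that by (simp add: expectation_binomial_pmf' Gb_def)
  have xs: "x \<in> {0..1}" "y \<in> {0..1}" "(x + y) / 2 \<in> {0..1}" using assms by auto
  have c: "Gb (2*n) (\<lambda>k. f (real k)) ((1 - 1/2) * x + (1/2) * y)
      \<le> (1 - 1/2) * Gb (2*n) (\<lambda>k. f (real k)) x + (1/2) * Gb (2*n) (\<lambda>k. f (real k)) y"
    using convex_onD[OF Gb_convex[OF assms(5)], of "1/2" x y] xs by simp
  have h: "(1 - 1/2) * x + (1/2) * y = (x + y) / 2" by simp
  have nn: "n + n = 2 * n" by simp
  show ?thesis
    using c xs unfolding h by (simp add: sum_indep_binomial E nn)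
qed

end
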